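(* Let $I\subset\mathbb{R}$ be an open interval, $n\in\mathbb{N}$, $x\in C^{n+1}(I)$, $\kappa,\mu\in\,]-1,+\infty[$, $t_0\in I$ and $T>0$. Set $C_{\beta T}^{\mu,\kappa}=\beta T\,\frac{\kappa+n+1}{\mu+\kappa+2n+2}$ for $\beta\in\{-1,1\}$, and $$I_{n+1}^+=\inf_{t_0<\theta<t_0+T}x^{(n+1)}(\theta),\quad S_{n+1}^+=\sup_{t_0<\theta<t_0+T}x^{(n+1)}(\theta),$$ $$I_{n+1}^-=\inf_{t_0-T<\theta<t_0}x^{(n+1)}(\theta),\quad S_{n+1}^-=\sup_{t_0-T<\theta<t_0}x^{(n+1)}(\theta).$$ If $t_0+T\in I$, then $C_T^{\mu,\kappa}I_{n+1}^+\le e_{R_n,T}^{\mu,\kappa}(t_0)\le C_T^{\mu,\kappa}S_{n+1}^+$; if $t_0-T\in I$, then $C_{-T}^{\mu,\kappa}S_{n+1}^-\le e_{R_n,-T}^{\mu,\kappa}(t_0)\le C_{-T}^{\mu,\kappa}I_{n+1}^-$.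
   Context: For $a,b>-1$ let $w^{a,b}(t)=t^{b}(1-t)^{a}$ on $(0,1)$ and $P_k^{a,b}(t)=\sum_{s=0}^{k}\binom{k+a}{s}\binom{k+b}{k-s}(t-1)^{k-s}t^{s}$ (Jacobi polynomial on $[0,1]$); $B(\cdot,\cdot)$ is the Beta function. For $\beta\in\{-1,1\}$ with $t_0+\beta T\in I$, the minimal Jacobi estimator of $x^{(n)}(t_0)$ applied to the noise-free signal $x$ is $$\hat D_{\beta T}^{\mu,\kappa}x^{(n)}(t_0)=\frac{n!}{(\beta T)^{n}B(\kappa+n+1,\mu+n+1)}\int_0^1 w^{\mu,\kappa}(\tau)P_n^{\mu,\kappa}(\tau)\,x(t_0+\beta T\tau)\,d\tau,$$ and its bias term error is $e_{R_n,\beta T}^{\mu,\kappa}(t_0)=\hat D_{\beta T}^{\mu,\kappa}x^{(n)}(t_0)-x^{(n)}(t_0)$. *)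

theory Defs
  imports "HOL-Analysis.Analysis"
begin

definition Ck_on :: "nat \<Rightarrow> real set \<Rightarrow> (real \<Rightarrow> real) \<Rightarrow> bool" where
  "Ck_on k I f \<longleftrightarrow>
     (\<forall>j<k. \<forall>t\<in>I. ((deriv ^^ j) f has_real_derivative (deriv ^^ Suc j) f t) (at t))
     \<and> continuous_on I ((deriv ^^ k) f)"

definition jacobi_weight :: "real \<Rightarrow> real \<Rightarrow> real \<Rightarrow> real" where
  "jacobi_weight a b t = t powr b * (1 - t) powr a"

definition jacobi_poly :: "nat \<Rightarrow> real \<Rightarrow> real \<Rightarrow> real \<Rightarrow> real" where
  "jacobi_poly k a b t =
     (\<Sum>s=0..k. ((real k + a) gchoose s) * ((real k + b) gchoose (k - s))
                 * (t - 1) ^ (k - s) * t ^ s)"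

definition jacobi_estimator ::
    "nat \<Rightarrow> real \<Rightarrow> real \<Rightarrow> real \<Rightarrow> (real \<Rightarrow> real) \<Rightarrow> real \<Rightarrow> real" where
  "jacobi_estimator n \<mu> \<kappa> h x t0 =
     fact n / (h ^ n * Beta (\<kappa> + real n + 1) (\<mu> + real n + 1))
     * integral {0..1} (\<lambda>\<tau>. jacobi_weight \<mu> \<kappa> \<tau> * jacobi_poly n \<mu> \<kappa> \<tau> * x (t0 + h * \<tau>))"

definition jacobi_bias_error ::
    "nat \<Rightarrow> real \<Rightarrow> real \<Rightarrow> real \<Rightarrow> (real \<Rightarrow> real) \<Rightarrow> real \<Rightarrow> real" where
  "jacobi_bias_error n \<mu> \<kappa> h x t0 = jacobi_estimator n \<mu> \<kappa> h x t0 - (deriv ^^ n) x t0"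

definition jacobi_C :: "nat \<Rightarrow> real \<Rightarrow> real \<Rightarrow> real \<Rightarrow> real" where
  "jacobi_C n \<mu> \<kappa> h = h * (\<kappa> + real n + 1) / (\<mu> + \<kappa> + 2 * real n + 2)"

end

theory Submission
  imports Defs
begin

lemma leibniz_step:
  fixes u v :: "nat \<Rightarrow> real \<Rightarrow> real"
  assumes du: "\<And>s. (u s has_real_derivative u (Suc s) t) (at t)"
    and dv: "\<And>r. (v r has_real_derivative v (Suc r) t) (at t)"
  shows "((\<lambda>t. \<Sum>s\<le>j. real (j choose s) * u s t * v (j - s) t) has_real_derivative
           (\<Sum>s\<le>Suc j. real (Suc j choose s) * u s t * v (Suc j - s) t)) (at t)"
proof -
  have D: "((\<lambda>t. \<Sum>s\<le>j. real (j choose s) * u s t * v (j - s) t) has_real_derivative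
     (\<Sum>s\<le>j. real (j choose s) * u (Suc s) t * v (j - s) t + real (j choose s) * u s t * v (Suc (j - s)) t)) (at t)"
    by (intro DERIV_sum) (auto intro!: derivative_eq_intros du dv simp: algebra_simps)
  have D2: "(\<Sum>s\<le>j. real (j choose s) * u (Suc s) t * v (j - s) t + real (j choose s) * u s t * v (Suc (j - s)) t)
     = (\<Sum>s\<le>j. real (j choose s) * u (Suc s) t * v (j - s) t) + (\<Sum>s\<le>j. real (j choose s) * u s t * v (Suc (j - s)) t)"
    by (rule sum.distrib)
  have e1: "(\<Sum>s\<le>Suc j. real (j choose s) * u s t * v (Suc j - s) t)
      = u 0 t * v (Suc j) t + (\<Sum>s\<le>j. real (j choose Suc s) * u (Suc s) t * v (j - s) t)"
    by (subst sum.atMost_Suc_shift) simp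
  have e2: "(\<Sum>s\<le>Suc j. real (j choose s) * u s t * v (Suc j - s) t)
      = (\<Sum>s\<le>j. real (j choose s) * u s t * v (Suc (j - s)) t)"
    by (simp add: Suc_diff_le)
  have e3: "(\<Sum>s\<le>Suc j. real (Suc j choose s) * u s t * v (Suc j - s) t)
      = u 0 t * v (Suc j) t + (\<Sum>s\<le>j. real (j choose s) * u (Suc s) t * v (j - s) t)
        + (\<Sum>s\<le>j. real (j choose Suc s) * u (Suc s) t * v (j - s) t)"
    by (subst sum.atMost_Suc_shift) (simp add: sum.distrib algebra_simps)
  have eq: "(\<Sum>s\<le>j. real (j choose s) * u (Suc s) t * v (j - s) t + real (j choose s) * u s t * v (Suc (j - s)) t)
     = (\<Sum>s\<le>Suc j. real (Suc j choose s) * u s t * v (Suc j - s) t)"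
    using D2 e1 e2 e3 by linarith
  show ?thesis using D unfolding eq .
qed

definition ff :: "real \<Rightarrow> nat \<Rightarrow> real" where "ff a s = (\<Prod>i<s. a - real i)"
definition uu :: "real \<Rightarrow> nat \<Rightarrow> real \<Rightarrow> real" where
  "uu A s \<tau> = ff A s * \<tau> powr (A - real s)"
definition vv :: "real \<Rightarrow> nat \<Rightarrow> real \<Rightarrow> real" where
  "vv B r \<tau> = ff B r * (-1) ^ r * (1 - \<tau>) powr (B - real r)"
definition gg :: "real \<Rightarrow> real \<Rightarrow> nat \<Rightarrow> real \<Rightarrow> real" where
  "gg A B j \<tau> = (\<Sum>s\<le>j. real (j choose s) * uu A s \<tau> * vv B (j - s) \<tau>)"

lemma ff_Suc: "ff a (Suc s) = ff a s * (a - real s)"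
  by (simp add: ff_def)

lemma ff_gchoose: "ff a s = (a gchoose s) * fact s"
  by (simp add: ff_def gbinomial_mult_fact' atLeast0LessThan)

lemma uu_deriv: "0 < \<tau> \<Longrightarrow> (uu A s has_real_derivative uu A (Suc s) \<tau>) (at \<tau>)"
  unfolding uu_def ff_Suc
  by (rule derivative_eq_intros has_real_derivative_powr | simp)+
     (simp add: algebra_simps diff_diff_add)

lemma vv_deriv: "\<tau> < 1 \<Longrightarrow> (vv B r has_real_derivative vv B (Suc r) \<tau>) (at \<tau>)"
  unfolding vv_def ff_Suc
  by (auto intro!: derivative_eq_intros simp: algebra_simps diff_diff_add)

lemma gg_deriv: "0 < \<tau> \<Longrightarrow> \<tau> < 1 \<Longrightarrow> (gg A B j has_real_derivative gg A B (Suc j) \<tau>) (at \<tau>)"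
  unfolding gg_def[abs_def]
  by (rule leibniz_step[where u="uu A" and v="vv B"]) (auto intro: uu_deriv vv_deriv)

lemma gg_cont:
  assumes "A - real j > 0" "B - real j > 0"
  shows "continuous_on {0..1} (gg A B j)"
  unfolding gg_def[abs_def] uu_def vv_def using assms
  by (intro continuous_intros continuous_on_powr') auto

lemma gg_zero:
  assumes "A - real j > 0" "B - real j > 0"
  shows "gg A B j 0 = 0" "gg A B j 1 = 0"
  unfolding gg_def uu_def vv_def using assms by auto

lemma gg_term:
  assumes "0 < \<tau>" "\<tau> < 1" "s \<le> n"
  shows "real (n choose s) * uu (\<kappa> + real n) s \<tau> * vv (\<mu> + real n) (n - s) \<tau>
    = (-1)^n * fact n * (\<tau> powr \<kappa> * (1 - \<tau>) powr \<mu>) *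
      (((real n + \<mu>) gchoose (n - s)) * ((real n + \<kappa>) gchoose s) * (\<tau> - 1) ^ s * \<tau> ^ (n - s))"
proof -
  have p1: "\<tau> powr (\<kappa> + real n - real s) = \<tau> powr \<kappa> * \<tau> ^ (n - s)"
  proof -
    have e: "\<kappa> + real n - real s = \<kappa> + real (n - s)" using assms by (simp add: of_nat_diff)
    have r: "\<tau> powr real (n - s) = \<tau> ^ (n - s)" by (rule powr_realpow) (use assms in simp)
    show ?thesis unfolding e powr_add r ..
  qed
  have p2: "(1 - \<tau>) powr (\<mu> + real n - real (n - s)) = (1 - \<tau>) powr \<mu> * (1 - \<tau>) ^ s"
  proof -
    have e: "\<mu> + real n - real (n - s) = \<mu> + real s" using assms by (simp add: of_nat_diff)
    have r: "(1 - \<tau>) powr real s = (1 - \<tau>) ^ s" by (rule powr_realpow) (use assms in simp)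
    show ?thesis unfolding e powr_add r ..
  qed
  have f: "real (n choose s) * fact s * fact (n - s) = fact n"
  proof -
    have "real (fact s * fact (n - s) * (n choose s)) = real (fact n)"
      using binomial_fact_lemma[OF assms(3)] by simp
    thus ?thesis by (simp only: of_nat_mult of_nat_fact mult_ac)
  qed
  have sg: "(-1::real) ^ (n - s) * (1 - \<tau>) ^ s = (-1) ^ n * (\<tau> - 1) ^ s"
  proof -
    have "(1 - \<tau>) ^ s = (-1) ^ s * (\<tau> - 1) ^ s" by (simp add: power_mult_distrib[symmetric])
    moreover have "(-1::real) ^ (n - s) * (-1) ^ s = (-1) ^ n"
      using assms(3) by (simp add: power_add[symmetric])
    ultimately show ?thesis by (metis mult.assoc)
  qed
  have "real (n choose s) * uu (\<kappa> + real n) s \<tau> * vv (\<mu> + real n) (n - s) \<tau>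
     = (real (n choose s) * fact s * fact (n - s)) * ((-1::real) ^ (n - s) * (1 - \<tau>) ^ s) *
       (\<tau> powr \<kappa> * (1 - \<tau>) powr \<mu>) *
      (((real n + \<mu>) gchoose (n - s)) * ((real n + \<kappa>) gchoose s) * \<tau> ^ (n - s))"
    unfolding uu_def vv_def ff_gchoose p1 p2 by (simp add: algebra_simps)
  also have "\<dots> = (-1)^n * fact n * (\<tau> powr \<kappa> * (1 - \<tau>) powr \<mu>) *
      (((real n + \<mu>) gchoose (n - s)) * ((real n + \<kappa>) gchoose s) * (\<tau> - 1) ^ s * \<tau> ^ (n - s))"
    unfolding f sg by (simp add: algebra_simps)
  finally show ?thesis .
qed

lemma gg_n:
  assumes "0 < \<tau>" "\<tau> < 1"
  shows "gg (\<kappa> + real n) (\<mu> + real n) n \<tau> = (-1)^n * fact n * (jacobi_weight \<mu> \<kappa> \<tau> * jacobi_poly n \<mu> \<kappa> \<tau>)"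
proof -
  have "gg (\<kappa> + real n) (\<mu> + real n) n \<tau> = (\<Sum>s\<le>n. (-1)^n * fact n * (\<tau> powr \<kappa> * (1 - \<tau>) powr \<mu>) *
      (((real n + \<mu>) gchoose (n - s)) * ((real n + \<kappa>) gchoose s) * (\<tau> - 1) ^ s * \<tau> ^ (n - s)))"
    unfolding gg_def using gg_term[OF assms] by (intro sum.cong) auto
  also have "\<dots> = (-1)^n * fact n * (\<tau> powr \<kappa> * (1 - \<tau>) powr \<mu>) * (\<Sum>s\<le>n.
      (((real n + \<mu>) gchoose (n - s)) * ((real n + \<kappa>) gchoose s) * (\<tau> - 1) ^ s * \<tau> ^ (n - s)))"
    by (simp add: sum_distrib_left)
  also have "(\<Sum>s\<le>n. (((real n + \<mu>) gchoose (n - s)) * ((real n + \<kappa>) gchoose s) * (\<tau> - 1) ^ s * \<tau> ^ (n - s)))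
     = jacobi_poly n \<mu> \<kappa> \<tau>"
  proof -
    have "jacobi_poly n \<mu> \<kappa> \<tau> = (\<Sum>s=0..n. ((real n + \<mu>) gchoose (n - s)) * ((real n + \<kappa>) gchoose (n - (n - s)))
                 * (\<tau> - 1) ^ (n - (n - s)) * \<tau> ^ (n - s))"
      unfolding jacobi_poly_def by (subst sum.atLeastAtMost_rev) simp
    also have "\<dots> = (\<Sum>s=0..n. ((real n + \<mu>) gchoose (n - s)) * ((real n + \<kappa>) gchoose s)
                 * (\<tau> - 1) ^ s * \<tau> ^ (n - s))"
      by (intro sum.cong) auto
    finally show ?thesis by (simp add: atLeast0AtMost)
  qed
  finally show ?thesis by (simp add: jacobi_weight_def mult.commute)
qed

lemma gg0: "gg A B 0 \<tau> = \<tau> powr A * (1 - \<tau>) powr B"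
  by (simp add: gg_def uu_def vv_def ff_def)

lemma gg0_fun: "gg A B 0 = (\<lambda>\<tau>. \<tau> powr A * (1 - \<tau>) powr B)"
  by (rule ext) (simp add: gg0)

lemma integrable_weight:
  assumes A: "A > -1" and B: "B > -1" and c: "continuous_on {0..1} \<phi>"
  shows "(\<lambda>\<tau>. gg A B 0 \<tau> * \<phi> \<tau>) integrable_on {0..1}"
proof -
  have "((\<lambda>t. t powr (A + 1 - 1) * (1 - t) powr (B + 1 - 1)) has_integral Beta (A + 1) (B + 1)) {0..1}"
    by (rule has_integral_Beta_real) (use A B in auto)
  hence "(\<lambda>t. gg A B 0 t) integrable_on {0..1}" unfolding gg0 by auto
  hence ai: "(\<lambda>t. gg A B 0 t) absolutely_integrable_on {0..1}"
    by (rule nonnegative_absolutely_integrable_1) (simp add: gg0)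
  have "(\<lambda>\<tau>. \<phi> \<tau> * gg A B 0 \<tau>) absolutely_integrable_on {0..1}"
  proof (rule absolutely_integrable_bounded_measurable_product_real[OF _ _ _ ai])
    show "\<phi> \<in> borel_measurable (lebesgue_on {0..1})"
      by (rule continuous_imp_measurable_on_sets_lebesgue[OF c]) auto
    show "{0..1::real} \<in> sets lebesgue" by auto
    show "bounded (\<phi> ` {0..1})" by (rule compact_imp_bounded, rule compact_continuous_image[OF c]) auto
  qed
  hence "(\<lambda>\<tau>. \<phi> \<tau> * gg A B 0 \<tau>) integrable_on {0..1}"
    by (simp add: absolutely_integrable_on_def)
  thus ?thesis by (simp add: mult.commute)
qed

lemma ibp:
  fixes f :: "nat \<Rightarrow> real \<Rightarrow> real"
  assumes df: "\<And>k \<tau>. k < n \<Longrightarrow> 0 < \<tau> \<Longrightarrow> \<tau> < 1 \<Longrightarrow> (f k has_real_derivative f (Suc k) \<tau>) (at \<tau>)"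
    and cf: "\<And>k. k \<le> n \<Longrightarrow> continuous_on {0..1} (f k)"
    and A: "A - real n > -1" and B: "B - real n > -1" and B0: "B > -1"
  shows "j \<le> n \<Longrightarrow> ((\<lambda>\<tau>. gg A B j \<tau> * f (n - j) \<tau>) has_integral
            (-1)^j * integral {0..1} (\<lambda>\<tau>. gg A B 0 \<tau> * f n \<tau>)) {0..1}"
proof (induction j)
  case 0
  have "(\<lambda>\<tau>. gg A B 0 \<tau> * f n \<tau>) integrable_on {0..1}"
    by (rule integrable_weight) (use A B0 cf[of n] in auto)
  thus ?case by (simp add: integrable_integral)
next
  case (Suc j)
  hence jn: "j < n" by simp
  have gj: "A - real j > 0" "B - real j > 0" using jn A B by auto
  let ?F = "\<lambda>\<tau>. gg A B j \<tau> * f (n - Suc j) \<tau>"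
  have cF: "continuous_on {0..1} ?F"
    using gg_cont[OF gj] cf[of "n - Suc j"] by (intro continuous_intros) auto
  have dF: "(?F has_vector_derivative (gg A B (Suc j) \<tau> * f (n - Suc j) \<tau> + gg A B j \<tau> * f (n - j) \<tau>)) (at \<tau>)"
    if "\<tau> \<in> {0<..<1}" for \<tau>
  proof -
    from that have t: "0 < \<tau>" "\<tau> < 1" by auto
    have e: "Suc (n - Suc j) = n - j" using jn by simp
    have d2: "(f (n - Suc j) has_real_derivative f (n - j) \<tau>) (at \<tau>)"
      using df[of "n - Suc j" \<tau>] t jn unfolding e by auto
    have "(?F has_real_derivative (gg A B (Suc j) \<tau> * f (n - Suc j) \<tau> + gg A B j \<tau> * f (n - j) \<tau>)) (at \<tau>)"
      using DERIV_mult[OF gg_deriv[OF t] d2] by (simp add: algebra_simps)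
    thus ?thesis by (simp add: has_real_derivative_iff_has_vector_derivative)
  qed
  have "((\<lambda>\<tau>. gg A B (Suc j) \<tau> * f (n - Suc j) \<tau> + gg A B j \<tau> * f (n - j) \<tau>) has_integral (?F 1 - ?F 0)) {0..1}"
    by (rule fundamental_theorem_of_calculus_interior[OF _ cF dF]) simp_all
  hence I1: "((\<lambda>\<tau>. gg A B (Suc j) \<tau> * f (n - Suc j) \<tau> + gg A B j \<tau> * f (n - j) \<tau>) has_integral 0) {0..1}"
    using gg_zero[OF gj] by simp
  have I2: "((\<lambda>\<tau>. gg A B j \<tau> * f (n - j) \<tau>) has_integral
            (-1)^j * integral {0..1} (\<lambda>\<tau>. gg A B 0 \<tau> * f n \<tau>)) {0..1}"
    using Suc.IH Suc.prems by simp
  from has_integral_diff[OF I1 I2] show ?case by simp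
qed

lemma main:
  fixes I :: "real set" and n :: nat and x :: "real \<Rightarrow> real" and \<kappa> \<mu> t0 h m M :: real
  assumes I: "is_interval I" and Ck: "Ck_on (Suc n) I x"
    and k: "\<kappa> > -1" and mu: "\<mu> > -1" and t0: "t0 \<in> I" and th: "t0 + h \<in> I" and h0: "h \<noteq> 0"
    and bnd: "\<And>z. min t0 (t0 + h) < z \<Longrightarrow> z < max t0 (t0 + h) \<Longrightarrow>
                 m \<le> (deriv ^^ Suc n) x z \<and> (deriv ^^ Suc n) x z \<le> M"
  shows "(h > 0 \<longrightarrow> jacobi_C n \<mu> \<kappa> h * m \<le> jacobi_bias_error n \<mu> \<kappa> h x t0
                 \<and> jacobi_bias_error n \<mu> \<kappa> h x t0 \<le> jacobi_C n \<mu> \<kappa> h * M)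
       \<and> (h < 0 \<longrightarrow> jacobi_C n \<mu> \<kappa> h * M \<le> jacobi_bias_error n \<mu> \<kappa> h x t0
                 \<and> jacobi_bias_error n \<mu> \<kappa> h x t0 \<le> jacobi_C n \<mu> \<kappa> h * m)"
proof -
  define D where "D k = (deriv ^^ k) x" for k
  have dD: "(D j has_real_derivative D (Suc j) t) (at t)" if "j \<le> n" "t \<in> I" for j t
    using Ck that unfolding Ck_on_def D_def by auto
  have cN: "continuous_on I (D (Suc n))" using Ck unfolding Ck_on_def D_def by auto
  have cD: "continuous_on I (D j)" if "j \<le> Suc n" for j
  proof (cases "j = Suc n")
    case True thus ?thesis using cN by simp
  next
    case False
    hence "j \<le> n" using that by simp
    thus ?thesis using dD
      by (intro continuous_at_imp_continuous_on ballI DERIV_isCont) blast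
  qed
  have seg: "t0 + h * \<tau> \<in> I" if "\<tau> \<in> {0..1}" for \<tau>
  proof (cases "h > 0")
    case True
    have "h * \<tau> \<le> h * 1" using that True by (intro mult_left_mono) auto
    moreover have "0 \<le> h * \<tau>" using that True by auto
    ultimately have "t0 \<le> t0 + h * \<tau>" "t0 + h * \<tau> \<le> t0 + h" by linarith+
    thus ?thesis using I t0 th unfolding is_interval_1 by blast
  next
    case False
    hence hn: "h < 0" using h0 by simp
    have "h * 1 \<le> h * \<tau>" using that hn by (intro mult_left_mono_neg) auto
    moreover have "h * \<tau> \<le> 0" using that hn by (simp add: mult_nonpos_nonneg)
    ultimately have "t0 + h \<le> t0 + h * \<tau>" "t0 + h * \<tau> \<le> t0" by linarith+
    thus ?thesis using I t0 th unfolding is_interval_1 by blast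
  qed
  define f where "f k \<tau> = h ^ k * D k (t0 + h * \<tau>)" for k \<tau>
  have df: "(f k has_real_derivative f (Suc k) \<tau>) (at \<tau>)" if "k \<le> n" "\<tau> \<in> {0..1}" for k \<tau>
  proof -
    have "((\<lambda>\<tau>. D k (t0 + h * \<tau>)) has_real_derivative D (Suc k) (t0 + h * \<tau>) * h) (at \<tau>)"
      by (rule DERIV_chain2[where g="\<lambda>\<tau>. t0 + h * \<tau>", OF dD[OF that(1) seg[OF that(2)]]]) (auto intro!: derivative_eq_intros)
    from DERIV_cmult[OF this, of "h ^ k"] show ?thesis
      unfolding f_def by (simp add: algebra_simps)
  qed
  have cf: "continuous_on {0..1} (f k)" if "k \<le> Suc n" for k
    unfolding f_def[abs_def]
    by (intro continuous_intros continuous_on_compose2[OF cD[OF that]]) (auto intro: seg)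
  define A where "A = \<kappa> + real n"
  define B where "B = \<mu> + real n"
  define g where "g = gg A B 0"
  define X where "X = integral {0..1} (\<lambda>\<tau>. gg A B 0 \<tau> * f n \<tau>)"
  have ib: "((\<lambda>\<tau>. gg A B n \<tau> * f (n - n) \<tau>) has_integral (-1)^n * X) {0..1}"
    unfolding X_def
    by (rule ibp[of n f A B n]) (use df cf k mu in \<open>auto simp: A_def B_def\<close>)
  have ib2: "((\<lambda>\<tau>. jacobi_weight \<mu> \<kappa> \<tau> * jacobi_poly n \<mu> \<kappa> \<tau> * x (t0 + h * \<tau>)) has_integral X / fact n) {0..1}"
  proof -
    have "((\<lambda>\<tau>. ((-1)^n / fact n) * (gg A B n \<tau> * f (n - n) \<tau>)) has_integral ((-1)^n / fact n) * ((-1)^n * X)) {0..1}"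
      by (rule has_integral_mult_right[OF ib])
    moreover have "((-1::real)^n / fact n) * ((-1)^n * X) = X / fact n"
      by (simp flip: power_add add: power_even_eq[symmetric] mult_2[symmetric])
    ultimately have ii: "((\<lambda>\<tau>. ((-1)^n / fact n) * (gg A B n \<tau> * f (n - n) \<tau>)) has_integral X / fact n) {0..1}"
      by simp
    show ?thesis
    proof (rule has_integral_spike_finite[of "{0,1}", OF _ _ ii])
      show "finite {0::real, 1}" by simp
    next
      fix \<tau> :: real assume "\<tau> \<in> {0..1} - {0, 1}"
      hence t: "0 < \<tau>" "\<tau> < 1" by auto
      show "jacobi_weight \<mu> \<kappa> \<tau> * jacobi_poly n \<mu> \<kappa> \<tau> * x (t0 + h * \<tau>)
          = (- 1) ^ n / fact n * (gg A B n \<tau> * f (n - n) \<tau>)"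
        unfolding A_def B_def gg_n[OF t] by (simp add: f_def D_def power_mult_distrib[symmetric])
    qed
  qed
  have gnn: "0 \<le> g \<tau>" for \<tau> by (simp add: g_def gg0)
  define Be where "Be = Beta (\<kappa> + real n + 1) (\<mu> + real n + 1)"
  define Be2 where "Be2 = Beta (\<kappa> + real n + 1 + 1) (\<mu> + real n + 1)"
  have IBe: "(g has_integral Be) {0..1}"
  proof -
    have "((\<lambda>t. t powr (\<kappa> + real n + 1 - 1) * (1 - t) powr (\<mu> + real n + 1 - 1)) has_integral Be) {0..1}"
      unfolding Be_def by (rule has_integral_Beta_real) (use k mu in auto)
    thus ?thesis by (simp add: g_def gg0_fun A_def B_def)
  qed
  have IBe2: "((\<lambda>\<tau>. \<tau> * g \<tau>) has_integral Be2) {0..1}"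
  proof -
    have "((\<lambda>t. t powr (\<kappa> + real n + 1 + 1 - 1) * (1 - t) powr (\<mu> + real n + 1 - 1)) has_integral Be2) {0..1}"
      unfolding Be2_def by (rule has_integral_Beta_real) (use k mu in auto)
    thus ?thesis
    proof (rule has_integral_eq[rotated])
      fix t :: real assume t: "t \<in> {0..1}"
      have "t powr (1 + (\<kappa> + real n)) = t * t powr (\<kappa> + real n)"
      proof (cases "t = 0")
        case True thus ?thesis using k by simp
      next
        case False thus ?thesis using t by (simp add: powr_add powr_one)
      qed
      thus "t powr (\<kappa> + real n + 1 + 1 - 1) * (1 - t) powr (\<mu> + real n + 1 - 1) = t * g t"
        by (simp add: g_def gg0 A_def B_def)
    qed
  qed
  have Bpos: "Be > 0" unfolding Be_def Beta_def using k mu by auto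
  have den: "\<kappa> + \<mu> + 2 * real n + 2 > 0" using k mu by simp
  have Be2v: "Be2 = (\<kappa> + real n + 1) / (\<kappa> + \<mu> + 2 * real n + 2) * Be"
  proof -
    have "((\<kappa> + real n + 1) + (\<mu> + real n + 1)) * Be2 = (\<kappa> + real n + 1) * Be"
      unfolding Be_def Be2_def by (rule Beta_plus1_left) (use k in auto)
    thus ?thesis using den by (simp add: field_simps)
  qed
  define Z where "Z = integral {0..1} (\<lambda>\<tau>. g \<tau> * D n (t0 + h * \<tau>))"
  have cDn: "continuous_on {0..1} (\<lambda>\<tau>. D n (t0 + h * \<tau>))"
    by (intro continuous_intros continuous_on_compose2[OF cD[of n]]) (auto intro: seg)
  have IZ: "((\<lambda>\<tau>. g \<tau> * D n (t0 + h * \<tau>)) has_integral Z) {0..1}"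
    unfolding Z_def g_def A_def B_def
    by (rule integrable_integral, rule integrable_weight[OF _ _ cDn]) (use k mu in auto)
  have X: "X = h ^ n * Z"
  proof -
    have "((\<lambda>\<tau>. h ^ n * (g \<tau> * D n (t0 + h * \<tau>))) has_integral h ^ n * Z) {0..1}"
      by (rule has_integral_mult_right[OF IZ])
    hence "((\<lambda>\<tau>. gg A B 0 \<tau> * f n \<tau>) has_integral h ^ n * Z) {0..1}"
      by (simp add: g_def f_def algebra_simps)
    thus ?thesis unfolding X_def by (rule integral_unique)
  qed
  have hn0: "h ^ n \<noteq> 0" using h0 by simp
  have est: "jacobi_estimator n \<mu> \<kappa> h x t0 = Z / Be"
    unfolding jacobi_estimator_def integral_unique[OF ib2] X Be_def[symmetric]
    using hn0 h0 Bpos by (simp add: field_simps)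
  define Y where "Y = Z - Be * D n t0"
  have IY: "((\<lambda>\<tau>. g \<tau> * (D n (t0 + h * \<tau>) - D n t0)) has_integral Y) {0..1}"
  proof -
    have "((\<lambda>\<tau>. g \<tau> * D n (t0 + h * \<tau>) - g \<tau> * D n t0) has_integral Z - Be * D n t0) {0..1}"
      by (rule has_integral_diff[OF IZ has_integral_mult_left[OF IBe]])
    thus ?thesis unfolding Y_def by (simp add: algebra_simps)
  qed
  have err: "jacobi_bias_error n \<mu> \<kappa> h x t0 = Y / Be"
    unfolding jacobi_bias_error_def est Y_def D_def[symmetric] using Bpos by (simp add: field_simps)
  have mvt: "\<exists>z. min t0 (t0 + h) < z \<and> z < max t0 (t0 + h) \<and>
              D n (t0 + h * \<tau>) - D n t0 = h * \<tau> * D (Suc n) z"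
    if t: "0 < \<tau>" "\<tau> \<le> 1" for \<tau>
  proof (cases "h > 0")
    case True
    have lt: "t0 < t0 + h * \<tau>" using t True by simp
    have le: "h * \<tau> \<le> h" using t True by (metis mult.right_neutral mult_left_mono less_le)
    have "\<exists>z. t0 < z \<and> z < t0 + h * \<tau> \<and> D n (t0 + h * \<tau>) - D n t0 = (t0 + h * \<tau> - t0) * D (Suc n) z"
    proof (rule MVT2[OF lt])
      fix y assume "t0 \<le> y" "y \<le> t0 + h * \<tau>"
      hence "y \<in> I" using I t0 th le unfolding is_interval_1 by (meson add_left_mono order.trans)
      thus "(D n has_real_derivative D (Suc n) y) (at y)" by (rule dD[OF order.refl])
    qed
    then obtain z where "t0 < z" "z < t0 + h * \<tau>" "D n (t0 + h * \<tau>) - D n t0 = h * \<tau> * D (Suc n) z"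
      by auto
    thus ?thesis using True le by (intro exI[of _ z]) auto
  next
    case False
    hence hn: "h < 0" using h0 by simp
    have lt: "t0 + h * \<tau> < t0" using t hn by (simp add: mult_neg_pos)
    have le: "h \<le> h * \<tau>" using t hn by (metis mult.right_neutral mult_left_mono_neg less_le)
    have "\<exists>z. t0 + h * \<tau> < z \<and> z < t0 \<and> D n t0 - D n (t0 + h * \<tau>) = (t0 - (t0 + h * \<tau>)) * D (Suc n) z"
    proof (rule MVT2[OF lt])
      fix y assume "t0 + h * \<tau> \<le> y" "y \<le> t0"
      hence "y \<in> I" using I t0 th le unfolding is_interval_1 by (meson add_left_mono order.trans)
      thus "(D n has_real_derivative D (Suc n) y) (at y)" by (rule dD[OF order.refl])
    qed
    then obtain z where z: "t0 + h * \<tau> < z" "z < t0" "D n t0 - D n (t0 + h * \<tau>) = (t0 - (t0 + h * \<tau>)) * D (Suc n) z"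
      by auto
    have "t0 + h < z" using z(1) le by linarith
    moreover have "D n (t0 + h * \<tau>) - D n t0 = h * \<tau> * D (Suc n) z" using z(3) by (simp add: algebra_simps)
    ultimately show ?thesis using hn z(2) by (intro exI[of _ z]) auto
  qed
  have bp: "h * \<tau> * m \<le> D n (t0 + h * \<tau>) - D n t0 \<and> D n (t0 + h * \<tau>) - D n t0 \<le> h * \<tau> * M"
    if "h > 0" "\<tau> \<in> {0..1}" for \<tau>
  proof (cases "\<tau> = 0")
    case True thus ?thesis by simp
  next
    case False
    hence t: "0 < \<tau>" "\<tau> \<le> 1" using that by auto
    then obtain z where z: "min t0 (t0 + h) < z" "z < max t0 (t0 + h)"
      "D n (t0 + h * \<tau>) - D n t0 = h * \<tau> * D (Suc n) z" using mvt by blast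
    have b: "m \<le> D (Suc n) z" "D (Suc n) z \<le> M" using bnd[OF z(1,2)] unfolding D_def by auto
    have p: "h * \<tau> \<ge> 0" using t that by simp
    show ?thesis unfolding z(3) using mult_left_mono[OF b(1) p] mult_left_mono[OF b(2) p] by simp
  qed
  have bn: "h * \<tau> * M \<le> D n (t0 + h * \<tau>) - D n t0 \<and> D n (t0 + h * \<tau>) - D n t0 \<le> h * \<tau> * m"
    if "h < 0" "\<tau> \<in> {0..1}" for \<tau>
  proof (cases "\<tau> = 0")
    case True thus ?thesis by simp
  next
    case False
    hence t: "0 < \<tau>" "\<tau> \<le> 1" using that by auto
    then obtain z where z: "min t0 (t0 + h) < z" "z < max t0 (t0 + h)"
      "D n (t0 + h * \<tau>) - D n t0 = h * \<tau> * D (Suc n) z" using mvt by blast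
    have b: "m \<le> D (Suc n) z" "D (Suc n) z \<le> M" using bnd[OF z(1,2)] unfolding D_def by auto
    have p: "h * \<tau> \<le> 0" using t that by (simp add: mult_nonpos_nonneg)
    show ?thesis unfolding z(3) using mult_left_mono_neg[OF b(1) p] mult_left_mono_neg[OF b(2) p] by simp
  qed
  have Im: "((\<lambda>\<tau>. h * m * (\<tau> * g \<tau>)) has_integral h * m * Be2) {0..1}"
    by (rule has_integral_mult_right[OF IBe2])
  have IM: "((\<lambda>\<tau>. h * M * (\<tau> * g \<tau>)) has_integral h * M * Be2) {0..1}"
    by (rule has_integral_mult_right[OF IBe2])
  have key: "h * c * Be2 = jacobi_C n \<mu> \<kappa> h * c * Be" for c
    unfolding Be2v jacobi_C_def using den by (simp add: field_simps)
  have fin: "(jacobi_C n \<mu> \<kappa> h * c \<le> Y / Be) = (h * c * Be2 \<le> Y)"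
            "(Y / Be \<le> jacobi_C n \<mu> \<kappa> h * c) = (Y \<le> h * c * Be2)" for c
    unfolding key using Bpos by (simp_all add: pos_le_divide_eq pos_divide_le_eq)
  have mono: "g \<tau> * a \<le> g \<tau> * b" if "a \<le> b" for a b \<tau>
    using mult_left_mono[OF that gnn] .
  have ec: "h * c * (\<tau> * g \<tau>) = g \<tau> * (h * \<tau> * c)" for c \<tau> by (simp add: mult_ac)
  show ?thesis unfolding err fin
  proof (intro conjI impI)
    assume hp: "h > 0"
    show "h * m * Be2 \<le> Y"
    proof (rule has_integral_le[OF Im IY])
      fix \<tau> assume "\<tau> \<in> {0..1::real}"
      from bp[OF hp this] show "h * m * (\<tau> * g \<tau>) \<le> g \<tau> * (D n (t0 + h * \<tau>) - D n t0)"
        unfolding ec by (intro mono) simp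
    qed
    show "Y \<le> h * M * Be2"
    proof (rule has_integral_le[OF IY IM])
      fix \<tau> assume "\<tau> \<in> {0..1::real}"
      from bp[OF hp this] show "g \<tau> * (D n (t0 + h * \<tau>) - D n t0) \<le> h * M * (\<tau> * g \<tau>)"
        unfolding ec by (intro mono) simp
    qed
  next
    assume hn: "h < 0"
    show "h * M * Be2 \<le> Y"
    proof (rule has_integral_le[OF IM IY])
      fix \<tau> assume "\<tau> \<in> {0..1::real}"
      from bn[OF hn this] show "h * M * (\<tau> * g \<tau>) \<le> g \<tau> * (D n (t0 + h * \<tau>) - D n t0)"
        unfolding ec by (intro mono) simp
    qed
    show "Y \<le> h * m * Be2"
    proof (rule has_integral_le[OF IY Im])
      fix \<tau> assume "\<tau> \<in> {0..1::real}"
      from bn[OF hn this] show "g \<tau> * (D n (t0 + h * \<tau>) - D n t0) \<le> h * m * (\<tau> * g \<tau>)"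
        unfolding ec by (intro mono) simp
    qed
  qed
qed


lemma bdd_window:
  assumes I: "is_interval I" and Ck: "Ck_on (Suc n) I x" and a: "a \<in> I" and b: "b \<in> I"
  shows "bdd_below ((deriv ^^ Suc n) x ` {a<..<b}) \<and> bdd_above ((deriv ^^ Suc n) x ` {a<..<b})"
proof -
  have sub: "{a..b} \<subseteq> I"
  proof
    fix y assume "y \<in> {a..b}"
    hence "a \<le> y" "y \<le> b" by auto
    thus "y \<in> I" using I a b unfolding is_interval_1 by blast
  qed
  have cI: "continuous_on I ((deriv ^^ Suc n) x)" using Ck unfolding Ck_on_def by blast
  have c: "continuous_on {a..b} ((deriv ^^ Suc n) x)"
    by (rule continuous_on_subset[OF cI sub])
  have bd: "bounded ((deriv ^^ Suc n) x ` {a..b})"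
    by (rule compact_imp_bounded, rule compact_continuous_image[OF c]) auto
  have s2: "(deriv ^^ Suc n) x ` {a<..<b} \<subseteq> (deriv ^^ Suc n) x ` {a..b}" by auto
  show ?thesis
    using bdd_below_mono[OF bounded_imp_bdd_below[OF bd] s2] bdd_above_mono[OF bounded_imp_bdd_above[OF bd] s2]
    by blast
qed

theorem proposition2:
  fixes I :: "real set" and n :: nat and x :: "real \<Rightarrow> real"
    and \<kappa> \<mu> t0 T :: real
  assumes "open I" and "is_interval I" and "I \<noteq> {}"
    and "Ck_on (Suc n) I x"
    and "\<kappa> > -1" and "\<mu> > -1"
    and "t0 \<in> I" and "T > 0"
  shows "(t0 + T \<in> I \<longrightarrow>
            jacobi_C n \<mu> \<kappa> T * (INF \<theta>\<in>{t0<..<t0+T}. (deriv ^^ Suc n) x \<theta>)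
              \<le> jacobi_bias_error n \<mu> \<kappa> T x t0
          \<and> jacobi_bias_error n \<mu> \<kappa> T x t0
              \<le> jacobi_C n \<mu> \<kappa> T * (SUP \<theta>\<in>{t0<..<t0+T}. (deriv ^^ Suc n) x \<theta>))
       \<and> (t0 - T \<in> I \<longrightarrow>
            jacobi_C n \<mu> \<kappa> (-T) * (SUP \<theta>\<in>{t0-T<..<t0}. (deriv ^^ Suc n) x \<theta>)
              \<le> jacobi_bias_error n \<mu> \<kappa> (-T) x t0
          \<and> jacobi_bias_error n \<mu> \<kappa> (-T) x t0
              \<le> jacobi_C n \<mu> \<kappa> (-T) * (INF \<theta>\<in>{t0-T<..<t0}. (deriv ^^ Suc n) x \<theta>))"
proof (intro conjI impI)
  assume th: "t0 + T \<in> I"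
  let ?W = "{t0<..<t0+T}"
  have bd: "bdd_below ((deriv ^^ Suc n) x ` ?W) \<and> bdd_above ((deriv ^^ Suc n) x ` ?W)"
    by (rule bdd_window[OF assms(2,4,7) th])
  have "jacobi_C n \<mu> \<kappa> T * (INF \<theta>\<in>?W. (deriv ^^ Suc n) x \<theta>) \<le> jacobi_bias_error n \<mu> \<kappa> T x t0
                 \<and> jacobi_bias_error n \<mu> \<kappa> T x t0 \<le> jacobi_C n \<mu> \<kappa> T * (SUP \<theta>\<in>?W. (deriv ^^ Suc n) x \<theta>)"
  proof -
    have "\<And>z. min t0 (t0 + T) < z \<Longrightarrow> z < max t0 (t0 + T) \<Longrightarrow>
           (INF \<theta>\<in>?W. (deriv ^^ Suc n) x \<theta>) \<le> (deriv ^^ Suc n) x z \<and> (deriv ^^ Suc n) x z \<le> (SUP \<theta>\<in>?W. (deriv ^^ Suc n) x \<theta>)"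
      using assms(8) bd by (auto intro!: cINF_lower cSUP_upper)
    from main[OF assms(2,4,5,6,7) th _ this] show ?thesis using assms(8) by auto
  qed
  thus "jacobi_C n \<mu> \<kappa> T * (INF \<theta>\<in>?W. (deriv ^^ Suc n) x \<theta>) \<le> jacobi_bias_error n \<mu> \<kappa> T x t0"
     "jacobi_bias_error n \<mu> \<kappa> T x t0 \<le> jacobi_C n \<mu> \<kappa> T * (SUP \<theta>\<in>?W. (deriv ^^ Suc n) x \<theta>)"
    by blast+
next
  assume th: "t0 - T \<in> I"
  let ?W = "{t0-T<..<t0}"
  have bd: "bdd_below ((deriv ^^ Suc n) x ` ?W) \<and> bdd_above ((deriv ^^ Suc n) x ` ?W)"
    by (rule bdd_window[OF assms(2,4) th assms(7)])
  have th': "t0 + - T \<in> I" using th by simp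
  have "jacobi_C n \<mu> \<kappa> (- T) * (SUP \<theta>\<in>?W. (deriv ^^ Suc n) x \<theta>) \<le> jacobi_bias_error n \<mu> \<kappa> (- T) x t0
                 \<and> jacobi_bias_error n \<mu> \<kappa> (- T) x t0 \<le> jacobi_C n \<mu> \<kappa> (- T) * (INF \<theta>\<in>?W. (deriv ^^ Suc n) x \<theta>)"
  proof -
    have "\<And>z. min t0 (t0 + - T) < z \<Longrightarrow> z < max t0 (t0 + - T) \<Longrightarrow>
           (INF \<theta>\<in>?W. (deriv ^^ Suc n) x \<theta>) \<le> (deriv ^^ Suc n) x z \<and> (deriv ^^ Suc n) x z \<le> (SUP \<theta>\<in>?W. (deriv ^^ Suc n) x \<theta>)"
      using assms(8) bd by (auto intro!: cINF_lower cSUP_upper)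
    from main[OF assms(2,4,5,6,7) th' _ this] show ?thesis using assms(8) by auto
  qed
  thus "jacobi_C n \<mu> \<kappa> (- T) * (SUP \<theta>\<in>?W. (deriv ^^ Suc n) x \<theta>) \<le> jacobi_bias_error n \<mu> \<kappa> (- T) x t0"
     "jacobi_bias_error n \<mu> \<kappa> (- T) x t0 \<le> jacobi_C n \<mu> \<kappa> (- T) * (INF \<theta>\<in>?W. (deriv ^^ Suc n) x \<theta>)"
    by blast+
qed

end
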